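(* Let $\gamma$ be an isophotic curve on a smooth oriented surface $M\subset E^3$ with $k_g\equiv 0$, nowhere-vanishing normal curvature, and whose position vector always lies in the plane spanned by $\{T,V\}$. Then $\gamma$ is a slant helix if and only if $\gamma$ is a rectifying curve.
   Context: For a unit speed curve $\gamma$ on an oriented surface $M\subset E^3$, the Darboux frame is $T=\gamma'$, $U$ = unit normal of $M$ along $\gamma$, $V = U\times T$, satisfying $T' = k_g V + k_n U$, $V' = -k_g T + \tau_g U$, $U' = -k_n T - \tau_g V$; here $k_g$, $k_n$, $\tau_g$ are the geodesic curvature, normal curvature and geodesic torsion. The curve $\gamma$ is an isophotic curve if there is a fixed unit vector $d$ and a constant angle $\phi$ with $\langle U, d\rangle = \cos\phi$ along $\gamma$. "Position vector lies in the plane spanned by $\{T,V\}$" means $\gamma(s) = \mu_1(s)T(s) + \mu_2(s)V(s)$ for differentiable functions $\mu_1,\mu_2$. With Frenet frame $\{T,N,B\}$, curvature $\kappa>0$ and torsion $\tau$: $\gamma$ is a slant helix if its principal normal $N$ makes a constant angle with a fixed direction (equivalently, $\frac{\kappa^2}{(\kappa^2+\tau^2)^{3/2}}(\tau/\kappa)'$ is constant); $\gamma$ is a rectifying curve if its position vector always lies in its rectifying plane $\mathrm{span}\{T,B\}$ (equivalently, $\tau/\kappa = c_1 s + c_2$ for constants $c_1\neq 0$, $c_2$). *)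

theory Defs
  imports "HOL-Analysis.Analysis"
begin

text \<open>Coinductive = greatest fixed point, i.e. derivatives of all orders exist.\<close>

coinductive smooth_on :: "'a::euclidean_space set \<Rightarrow> ('a \<Rightarrow> 'b::euclidean_space) \<Rightarrow> bool" where
  "\<lbrakk> f differentiable_on S;
     \<And>i. i \<in> Basis \<Longrightarrow> smooth_on S (\<lambda>x. frechet_derivative f (at x) i) \<rbrakk>
   \<Longrightarrow> smooth_on S f"

definition local_param :: "(real^3) set \<Rightarrow> (real^2 \<Rightarrow> real^3) \<Rightarrow> (real^2) set \<Rightarrow> (real^3) set \<Rightarrow> bool" where
  "local_param M X W Q \<longleftrightarrow>
     open W \<and> open Q \<and> smooth_on W X \<and>
     (\<exists>Y. homeomorphism W (M \<inter> Q) X Y) \<and>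
     (\<forall>w\<in>W. inj (frechet_derivative X (at w)))"

definition regular_surface :: "(real^3) set \<Rightarrow> bool" where
  "regular_surface M \<longleftrightarrow>
     (\<forall>p\<in>M. \<exists>X W Q. p \<in> Q \<and> local_param M X W Q)"

definition unit_normal_field :: "(real^3) set \<Rightarrow> (real^3 \<Rightarrow> real^3) \<Rightarrow> bool" where
  "unit_normal_field M n \<longleftrightarrow>
     continuous_on M n \<and> (\<forall>p\<in>M. norm (n p) = 1) \<and>
     (\<forall>X W Q. local_param M X W Q \<longrightarrow>
        (\<forall>w\<in>W. \<forall>v. inner (n (X w)) (frechet_derivative X (at w) v) = 0))"

definition oriented_surface :: "(real^3) set \<Rightarrow> (real^3 \<Rightarrow> real^3) \<Rightarrow> bool" where
  "oriented_surface M n \<longleftrightarrow> regular_surface M \<and> unit_normal_field M n"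

definition tangent :: "(real \<Rightarrow> real^3) \<Rightarrow> real \<Rightarrow> real^3" where
  "tangent \<gamma> s = vector_derivative \<gamma> (at s)"

definition unit_speed_curve_on :: "(real^3) set \<Rightarrow> (real \<Rightarrow> real^3) \<Rightarrow> real set \<Rightarrow> bool" where
  "unit_speed_curve_on M \<gamma> I \<longleftrightarrow>
     is_interval I \<and> open I \<and> I \<noteq> {} \<and> smooth_on I \<gamma> \<and>
     (\<forall>s\<in>I. \<gamma> s \<in> M \<and> norm (tangent \<gamma> s) = 1)"

definition darbouxU :: "(real^3 \<Rightarrow> real^3) \<Rightarrow> (real \<Rightarrow> real^3) \<Rightarrow> real \<Rightarrow> real^3" where
  "darbouxU n \<gamma> s = n (\<gamma> s)"

definition darbouxV :: "(real^3 \<Rightarrow> real^3) \<Rightarrow> (real \<Rightarrow> real^3) \<Rightarrow> real \<Rightarrow> real^3" where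
  "darbouxV n \<gamma> s = cross3 (darbouxU n \<gamma> s) (tangent \<gamma> s)"

text \<open>From T' = k_g V + k_n U: geodesic and normal curvature.\<close>

definition geodesic_curvature :: "(real^3 \<Rightarrow> real^3) \<Rightarrow> (real \<Rightarrow> real^3) \<Rightarrow> real \<Rightarrow> real" where
  "geodesic_curvature n \<gamma> s = inner (vector_derivative (tangent \<gamma>) (at s)) (darbouxV n \<gamma> s)"

definition normal_curvature :: "(real^3 \<Rightarrow> real^3) \<Rightarrow> (real \<Rightarrow> real^3) \<Rightarrow> real \<Rightarrow> real" where
  "normal_curvature n \<gamma> s = inner (vector_derivative (tangent \<gamma>) (at s)) (darbouxU n \<gamma> s)"

definition isophotic :: "(real^3 \<Rightarrow> real^3) \<Rightarrow> (real \<Rightarrow> real^3) \<Rightarrow> real set \<Rightarrow> bool" where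
  "isophotic n \<gamma> I \<longleftrightarrow>
     (\<exists>d \<phi>. norm d = 1 \<and> (\<forall>s\<in>I. inner (darbouxU n \<gamma> s) d = cos \<phi>))"

definition position_in_TV_plane :: "(real^3 \<Rightarrow> real^3) \<Rightarrow> (real \<Rightarrow> real^3) \<Rightarrow> real set \<Rightarrow> bool" where
  "position_in_TV_plane n \<gamma> I \<longleftrightarrow>
     (\<exists>\<mu>1 \<mu>2. (\<forall>s\<in>I. \<mu>1 differentiable (at s) \<and> \<mu>2 differentiable (at s)) \<and>
        (\<forall>s\<in>I. \<gamma> s = \<mu>1 s *\<^sub>R tangent \<gamma> s + \<mu>2 s *\<^sub>R darbouxV n \<gamma> s))"

definition curvature :: "(real \<Rightarrow> real^3) \<Rightarrow> real \<Rightarrow> real" where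
  "curvature \<gamma> s = norm (vector_derivative (tangent \<gamma>) (at s))"

definition principal_normal :: "(real \<Rightarrow> real^3) \<Rightarrow> real \<Rightarrow> real^3" where
  "principal_normal \<gamma> s = (1 / curvature \<gamma> s) *\<^sub>R vector_derivative (tangent \<gamma>) (at s)"

definition binormal :: "(real \<Rightarrow> real^3) \<Rightarrow> real \<Rightarrow> real^3" where
  "binormal \<gamma> s = cross3 (tangent \<gamma> s) (principal_normal \<gamma> s)"

definition slant_helix :: "(real \<Rightarrow> real^3) \<Rightarrow> real set \<Rightarrow> bool" where
  "slant_helix \<gamma> I \<longleftrightarrow>
     (\<exists>d c. norm d = 1 \<and> (\<forall>s\<in>I. inner (principal_normal \<gamma> s) d = c))"

definition rectifying_curve :: "(real \<Rightarrow> real^3) \<Rightarrow> real set \<Rightarrow> bool" where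
  "rectifying_curve \<gamma> I \<longleftrightarrow>
     (\<exists>a1 a2. \<forall>s\<in>I. \<gamma> s = a1 s *\<^sub>R tangent \<gamma> s + a2 s *\<^sub>R binormal \<gamma> s)"

end

theory Submission
  imports Defs
begin


lemma frame_lemma:
  fixes x u t :: "real^3"
  assumes "u \<bullet> u = 1" "t \<bullet> t = 1" "u \<bullet> t = 0" "x \<bullet> t = 0" "x \<bullet> cross3 u t = 0"
  shows "x = (x \<bullet> u) *\<^sub>R u"
proof -
  have 1: "cross3 t (cross3 u t) = u"
    using Lagrange[of t u t] assms by (simp add: inner_commute)
  have 2: "cross3 u x = 0"
  proof -
    have "cross3 u x = - cross3 x (cross3 t (cross3 u t))"
      using 1 cross_skew by metis
    also have "\<dots> = 0" using Lagrange[of x t "cross3 u t"] assms by simp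
    finally show ?thesis .
  qed
  have "cross3 u (cross3 u x) = (u \<bullet> x) *\<^sub>R u - (u \<bullet> u) *\<^sub>R x" by (rule Lagrange)
  with 2 assms show ?thesis by (simp add: inner_commute)
qed

lemma local_flat:
  fixes X :: "real^2 \<Rightarrow> real^3"
  assumes dX: "(X has_derivative D) (at w0)" and inj: "inj D"
    and orth: "\<And>v. n0 \<bullet> D v = 0" and nn: "norm n0 \<le> 1" and e: "\<epsilon> > 0"
  shows "\<exists>\<delta>>0. \<forall>w. norm (w - w0) < \<delta> \<longrightarrow> \<bar>n0 \<bullet> (X w - X w0)\<bar> \<le> \<epsilon> * norm (X w - X w0)"
proof -
  have lin: "linear D" using dX has_derivative_linear by blast
  obtain c where c: "c > 0" "\<And>x. c * norm x \<le> norm (D x)"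
    using linear_inj_bounded_below_pos[OF lin inj] by blast
  define e where "e = min (c/2) (\<epsilon> * c / 2)"
  have e0: "e > 0" using c e by (simp add: e_def)
  obtain \<delta> where d: "\<delta> > 0" "\<And>y. norm (y - w0) < \<delta> \<Longrightarrow> norm (X y - X w0 - D (y - w0)) \<le> e * norm (y - w0)"
    using dX[unfolded has_derivative_at_alt] e0 by blast
  show ?thesis
  proof (intro exI[of _ \<delta>] conjI allI impI)
    fix w assume w: "norm (w - w0) < \<delta>"
    define r where "r = X w - X w0 - D (w - w0)"
    have r: "norm r \<le> e * norm (w - w0)" using d(2)[OF w] by (simp add: r_def)
    have "c * norm (w - w0) \<le> norm (D (w - w0))" by (rule c(2))
    also have "D (w - w0) = (X w - X w0) - r" by (simp add: r_def)
    also have "norm \<dots> \<le> norm (X w - X w0) + norm r" by (rule norm_triangle_ineq4)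
    finally have A: "c * norm (w - w0) \<le> norm (X w - X w0) + e * norm (w - w0)" using r by linarith
    have "e * norm (w - w0) \<le> c/2 * norm (w - w0)"
      by (intro mult_right_mono) (auto simp: e_def)
    with A have B: "c/2 * norm (w - w0) \<le> norm (X w - X w0)" by linarith
    have "n0 \<bullet> (X w - X w0) = n0 \<bullet> r + n0 \<bullet> D (w - w0)" by (simp add: r_def inner_diff_right)
    then have "\<bar>n0 \<bullet> (X w - X w0)\<bar> = \<bar>n0 \<bullet> r\<bar>" using orth by simp
    also have "\<dots> \<le> norm n0 * norm r" by (rule Cauchy_Schwarz_ineq2)
    also have "\<dots> \<le> 1 * norm r" by (intro mult_right_mono nn) auto
    also have "\<dots> \<le> (\<epsilon> * c / 2) * norm (w - w0)" using r
      by (smt (verit) e_def mult_right_mono norm_ge_zero min.cobounded2)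
    also have "\<dots> = \<epsilon> * (c/2 * norm (w - w0))" by simp
    also have "\<dots> \<le> \<epsilon> * norm (X w - X w0)" using B e by (intro mult_left_mono) auto
    finally show "\<bar>n0 \<bullet> (X w - X w0)\<bar> \<le> \<epsilon> * norm (X w - X w0)" .
  qed (rule d(1))
qed


lemma smooth_on_differentiable: "smooth_on S f \<Longrightarrow> f differentiable_on S"
  by (erule smooth_on.cases) simp

lemma normal_perp:
  fixes \<gamma> :: "real \<Rightarrow> real^3"
  assumes M: "oriented_surface M n" and gd: "(\<gamma> has_vector_derivative T) (at s)"
    and nT: "norm T = 1" and I: "open I" "s \<in> I" and IM: "\<And>t. t \<in> I \<Longrightarrow> \<gamma> t \<in> M"
  shows "n (\<gamma> s) \<bullet> T = 0"
proof -
  define p0 where "p0 = \<gamma> s"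
  have p0M: "p0 \<in> M" using IM I by (simp add: p0_def)
  obtain X W Q where pQ: "p0 \<in> Q" and lp: "local_param M X W Q"
    using M p0M unfolding oriented_surface_def regular_surface_def by blast
  have W: "open W" and Q: "open Q" and sm: "smooth_on W X"
    and inj: "\<And>w. w \<in> W \<Longrightarrow> inj (frechet_derivative X (at w))"
    using lp unfolding local_param_def by auto
  obtain Y where hom: "homeomorphism W (M \<inter> Q) X Y"
    using lp unfolding local_param_def by auto
  have XY: "\<And>p. p \<in> M \<inter> Q \<Longrightarrow> X (Y p) = p" and YW: "\<And>p. p \<in> M \<inter> Q \<Longrightarrow> Y p \<in> W"
    and Ycont: "continuous_on (M \<inter> Q) Y"
    using hom unfolding homeomorphism_def by auto
  define w0 where "w0 = Y p0"
  have w0W: "w0 \<in> W" and Xw0: "X w0 = p0" using p0M pQ XY YW by (auto simp: w0_def)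
  define D where "D = frechet_derivative X (at w0)"
  have "X differentiable (at w0)"
    using smooth_on_differentiable[OF sm] W w0W differentiable_on_eq_differentiable_at by blast
  then have dX: "(X has_derivative D) (at w0)" by (simp add: D_def frechet_derivative_works)
  have injD: "inj D" using inj w0W by (simp add: D_def)
  define n0 where "n0 = n p0"
  have un: "unit_normal_field M n" using M by (simp add: oriented_surface_def)
  have orth: "\<And>v. n0 \<bullet> D v = 0"
    using un lp w0W Xw0 unfolding unit_normal_field_def D_def n0_def by metis
  have nn: "norm n0 = 1" using un p0M unfolding unit_normal_field_def n0_def by blast
  have key: "\<bar>n0 \<bullet> T\<bar> \<le> \<epsilon> * (2 + \<epsilon>)" if e: "\<epsilon> > 0" for \<epsilon>
  proof -
    obtain d1 where d1: "d1 > 0" "\<And>w. norm (w - w0) < d1 \<Longrightarrow> \<bar>n0 \<bullet> (X w - X w0)\<bar> \<le> \<epsilon> * norm (X w - X w0)"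
      using local_flat[OF dX injD orth _ e] nn by auto
    obtain d2 where d2: "d2 > 0" "\<And>p. p \<in> M \<inter> Q \<Longrightarrow> dist p p0 < d2 \<Longrightarrow> dist (Y p) w0 < d1"
      using Ycont[unfolded continuous_on_iff] p0M pQ d1(1) unfolding w0_def by blast
    obtain d3 where d3: "d3 > 0" "ball p0 d3 \<subseteq> Q" using Q pQ open_contains_ball by blast
    obtain d4 where d4: "d4 > 0" "ball s d4 \<subseteq> I" using I open_contains_ball by blast
    obtain d5 where d5: "d5 > 0" "\<And>t. norm (t - s) < d5 \<Longrightarrow> norm (\<gamma> t - \<gamma> s - (t - s) *\<^sub>R T) \<le> \<epsilon> * norm (t - s)"
      using gd[unfolded has_vector_derivative_def has_derivative_at_alt] e by blast
    define m where "m = Min {d2 / (2 + \<epsilon>), d3 / (2 + \<epsilon>), d4, d5}"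
    have m0: "m > 0" using d2 d3 d4 d5 e by (simp add: m_def)
    have mle: "m \<le> x" if "x \<in> {d2 / (2 + \<epsilon>), d3 / (2 + \<epsilon>), d4, d5}" for x
      using that unfolding m_def by (intro Min_le) auto
    define h where "h = m / 2"
    have h0: "h > 0" using m0 by (simp add: h_def)
    have hlt: "h < d2 / (2 + \<epsilon>)" "h < d3 / (2 + \<epsilon>)" "h < d4" "h < d5"
    proof -
      have "m \<le> d2 / (2 + \<epsilon>)" "m \<le> d3 / (2 + \<epsilon>)" "m \<le> d4" "m \<le> d5" by (auto intro: mle)
      then show "h < d2 / (2 + \<epsilon>)" "h < d3 / (2 + \<epsilon>)" "h < d4" "h < d5"
        using m0 unfolding h_def by linarith+
    qed
    define t where "t = s + h"
    have ts: "t - s = h" by (simp add: t_def)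
    have tI: "t \<in> I" using d4 hlt ts h0 by (auto simp: dist_norm)
    define r where "r = \<gamma> t - \<gamma> s - h *\<^sub>R T"
    have r: "norm r \<le> \<epsilon> * h" using d5(2)[of t] hlt h0 by (simp add: ts r_def)
    have "norm (\<gamma> t - \<gamma> s) = norm (r + h *\<^sub>R T)" by (simp add: r_def)
    also have "\<dots> \<le> norm r + h" using nT h0 norm_triangle_ineq[of r "h *\<^sub>R T"] by simp
    finally have gt: "norm (\<gamma> t - \<gamma> s) \<le> (1 + \<epsilon>) * h" using r by (simp add: algebra_simps)
    have lt12: "(1 + \<epsilon>) * h < (2 + \<epsilon>) * h" using h0 by simp
    have l2: "(2 + \<epsilon>) * h < d2" "(2 + \<epsilon>) * h < d3" using hlt e by (simp_all add: pos_less_divide_eq mult.commute)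
    have dg: "dist (\<gamma> t) p0 < d2" "dist (\<gamma> t) p0 < d3"
      using gt l2 lt12 by (auto simp: p0_def dist_norm)
    have tMQ: "\<gamma> t \<in> M \<inter> Q" using IM[OF tI] d3 dg by (auto simp: dist_commute)
    have "norm (Y (\<gamma> t) - w0) < d1" using d2(2)[OF tMQ dg(1)] by (simp add: dist_norm)
    from d1(2)[OF this] have A: "\<bar>n0 \<bullet> (\<gamma> t - \<gamma> s)\<bar> \<le> \<epsilon> * norm (\<gamma> t - \<gamma> s)"
      using XY[OF tMQ] Xw0 by (simp add: p0_def)
    have "h * \<bar>n0 \<bullet> T\<bar> = \<bar>n0 \<bullet> (h *\<^sub>R T)\<bar>" using h0 by (simp add: abs_mult)
    also have "n0 \<bullet> (h *\<^sub>R T) = n0 \<bullet> (\<gamma> t - \<gamma> s) - n0 \<bullet> r" by (simp add: r_def inner_diff_right)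
    also have "\<bar>\<dots>\<bar> \<le> \<bar>n0 \<bullet> (\<gamma> t - \<gamma> s)\<bar> + \<bar>n0 \<bullet> r\<bar>" by linarith
    also have "\<bar>n0 \<bullet> r\<bar> \<le> norm r" using Cauchy_Schwarz_ineq2[of n0 r] nn by simp
    also have "\<bar>n0 \<bullet> (\<gamma> t - \<gamma> s)\<bar> \<le> \<epsilon> * ((1 + \<epsilon>) * h)"
      using A gt e by (meson mult_left_mono less_imp_le order_trans)
    finally have "h * \<bar>n0 \<bullet> T\<bar> \<le> h * (\<epsilon> * (2 + \<epsilon>))" using r by (simp add: algebra_simps)
    then show ?thesis using h0 by simp
  qed
  show ?thesis
  proof (rule ccontr)
    assume "n (\<gamma> s) \<bullet> T \<noteq> 0"
    then have a: "\<bar>n0 \<bullet> T\<bar> > 0" by (simp add: n0_def p0_def)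
    define \<epsilon> where "\<epsilon> = min 1 (\<bar>n0 \<bullet> T\<bar> / 4)"
    have e0: "\<epsilon> > 0" using a by (simp add: \<epsilon>_def)
    have "\<epsilon> * (2 + \<epsilon>) \<le> \<epsilon> * 3" using e0 by (simp add: \<epsilon>_def)
    also have "\<dots> \<le> 3/4 * \<bar>n0 \<bullet> T\<bar>" by (simp add: \<epsilon>_def)
    finally show False using key[OF e0] a by simp
  qed
qed

lemma smooth_on_D: "smooth_on S f \<Longrightarrow> f differentiable_on S \<and> smooth_on S (\<lambda>x. frechet_derivative f (at x) (1::real))"
  by (erule smooth_on.cases) auto

lemma curve_facts:
  fixes \<gamma> :: "real \<Rightarrow> real^3"
  assumes c: "unit_speed_curve_on M \<gamma> I"
  shows "\<And>s. s \<in> I \<Longrightarrow> (\<gamma> has_vector_derivative tangent \<gamma> s) (at s)"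
    and "\<And>s. s \<in> I \<Longrightarrow> (tangent \<gamma> has_vector_derivative vector_derivative (tangent \<gamma>) (at s)) (at s)"
    and "continuous_on I (\<lambda>s. vector_derivative (tangent \<gamma>) (at s))"
    and "\<And>s. s \<in> I \<Longrightarrow> vector_derivative (tangent \<gamma>) (at s) \<bullet> tangent \<gamma> s = 0"
    and "continuous_on I \<gamma>"
proof -
  have I: "open I" and sm: "smooth_on I \<gamma>" and nT: "\<And>s. s \<in> I \<Longrightarrow> norm (tangent \<gamma> s) = 1"
    using c unfolding unit_speed_curve_on_def by auto
  define F where "F = (\<lambda>x. frechet_derivative \<gamma> (at x) 1)"
  define G where "G = (\<lambda>x. frechet_derivative F (at x) 1)"
  have gdo: "\<gamma> differentiable_on I" and smF: "smooth_on I F"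
    using smooth_on_D[OF sm] by (auto simp: F_def)
  have Fdo: "F differentiable_on I" and smG: "smooth_on I G"
    using smooth_on_D[OF smF] by (auto simp: G_def)
  have Gdo: "G differentiable_on I" using smooth_on_differentiable[OF smG] .
  have vd: "vector_derivative f (at x) = frechet_derivative f (at x) 1" if "f differentiable (at x)"
    for f :: "real \<Rightarrow> real^3" and x
  proof -
    have 1: "(f has_derivative frechet_derivative f (at x)) (at x)" using that frechet_derivative_works by blast
    have 2: "(f has_derivative (\<lambda>h. h *\<^sub>R vector_derivative f (at x))) (at x)"
      using that vector_derivative_works has_vector_derivative_def by blast
    have "frechet_derivative f (at x) = (\<lambda>h. h *\<^sub>R vector_derivative f (at x))"
      using has_derivative_unique[OF 1 2] .
    then show ?thesis by simp
  qed
  have gdiff: "\<gamma> differentiable (at s)" if "s \<in> I" for s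
    using gdo I that differentiable_on_eq_differentiable_at by blast
  have Fdiff: "F differentiable (at s)" if "s \<in> I" for s
    using Fdo I that differentiable_on_eq_differentiable_at by blast
  have TF: "tangent \<gamma> s = F s" if "s \<in> I" for s
    using vd[OF gdiff[OF that]] by (simp add: tangent_def F_def)
  show A: "(\<gamma> has_vector_derivative tangent \<gamma> s) (at s)" if "s \<in> I" for s
    using gdiff[OF that] vector_derivative_works unfolding tangent_def by blast
  have FT: "(tangent \<gamma> has_vector_derivative vector_derivative F (at s)) (at s)" if "s \<in> I" for s
  proof -
    have "(F has_vector_derivative vector_derivative F (at s)) (at s)"
      using Fdiff[OF that] vector_derivative_works by blast
    then show ?thesis unfolding has_vector_derivative_def
      by (rule has_derivative_transform_within_open[OF _ I that]) (simp add: TF)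
  qed
  have VD: "vector_derivative (tangent \<gamma>) (at s) = G s" if "s \<in> I" for s
    using vector_derivative_unique_at[OF FT[OF that] vector_derivative_works[THEN iffD1, OF differentiableI_vector[OF FT[OF that]]]]
      vd[OF Fdiff[OF that]] by (simp add: G_def)
  show B: "(tangent \<gamma> has_vector_derivative vector_derivative (tangent \<gamma>) (at s)) (at s)" if "s \<in> I" for s
    using FT[OF that] vector_derivative_works differentiableI_vector by blast
  show "continuous_on I (\<lambda>s. vector_derivative (tangent \<gamma>) (at s))"
    using differentiable_imp_continuous_on[OF Gdo] by (rule continuous_on_eq) (simp add: VD)
  show "continuous_on I \<gamma>" using differentiable_imp_continuous_on[OF gdo] .
  show "vector_derivative (tangent \<gamma>) (at s) \<bullet> tangent \<gamma> s = 0" if s: "s \<in> I" for s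
  proof -
    define T' where "T' = vector_derivative (tangent \<gamma>) (at s)"
    have Bd: "(tangent \<gamma> has_derivative (\<lambda>h. h *\<^sub>R T')) (at s)"
      using B[OF s] by (simp add: T'_def has_vector_derivative_def)
    have d1: "((\<lambda>t. tangent \<gamma> t \<bullet> tangent \<gamma> t) has_derivative
        (\<lambda>h. tangent \<gamma> s \<bullet> (h *\<^sub>R T') + (h *\<^sub>R T') \<bullet> tangent \<gamma> s)) (at s)"
      by (rule has_derivative_inner[OF Bd Bd])
    have d2: "((\<lambda>t. tangent \<gamma> t \<bullet> tangent \<gamma> t) has_derivative (\<lambda>h. 0)) (at s)"
    proof (rule has_derivative_transform_within_open[OF has_derivative_const I s])
      fix x assume "x \<in> I"
      then have "norm (tangent \<gamma> x) = 1" by (rule nT)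
      then show "1 = tangent \<gamma> x \<bullet> tangent \<gamma> x" by (simp add: norm_eq_1)
    qed
    have "(\<lambda>h. tangent \<gamma> s \<bullet> (h *\<^sub>R T') + (h *\<^sub>R T') \<bullet> tangent \<gamma> s) = (\<lambda>h. 0)"
      using has_derivative_unique[OF d1 d2] .
    then have "tangent \<gamma> s \<bullet> T' + T' \<bullet> tangent \<gamma> s = 0" using fun_cong[of _ _ "1::real"] by fastforce
    then show ?thesis by (simp add: T'_def inner_commute)
  qed
qed

theorem theorem4p4:
  fixes M :: "(real^3) set" and n :: "real^3 \<Rightarrow> real^3"
    and \<gamma> :: "real \<Rightarrow> real^3" and I :: "real set"
  assumes "oriented_surface M n"
    and "unit_speed_curve_on M \<gamma> I"
    and "isophotic n \<gamma> I"
    and "\<forall>s\<in>I. geodesic_curvature n \<gamma> s = 0"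
    and "\<forall>s\<in>I. normal_curvature n \<gamma> s \<noteq> 0"
    and "position_in_TV_plane n \<gamma> I"
  shows "slant_helix \<gamma> I \<longleftrightarrow> rectifying_curve \<gamma> I"
proof -
  note M = assms(1) and c = assms(2)
  have I: "open I" "is_interval I" and gM: "\<And>s. s \<in> I \<Longrightarrow> \<gamma> s \<in> M"
    and nT: "\<And>s. s \<in> I \<Longrightarrow> norm (tangent \<gamma> s) = 1"
    using c unfolding unit_speed_curve_on_def by auto
  note cf = curve_facts[OF c]
  have un: "unit_normal_field M n" using M by (simp add: oriented_surface_def)
  define k where "k s = normal_curvature n \<gamma> s" for s
  have frame: "principal_normal \<gamma> s = sgn (k s) *\<^sub>R darbouxU n \<gamma> s
      \<and> binormal \<gamma> s = - sgn (k s) *\<^sub>R darbouxV n \<gamma> s \<and> k s \<noteq> 0" if s: "s \<in> I" for s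
  proof -
    define T where "T = tangent \<gamma> s"
    define U where "U = darbouxU n \<gamma> s"
    define T' where "T' = vector_derivative (tangent \<gamma>) (at s)"
    have UT: "U \<bullet> T = 0" unfolding U_def T_def darbouxU_def
      by (rule normal_perp[OF M cf(1)[OF s] nT[OF s] I(1) s gM])
    have UU: "U \<bullet> U = 1" using un gM[OF s] unfolding unit_normal_field_def U_def darbouxU_def
      by (simp add: norm_eq_1)
    have TT: "T \<bullet> T = 1" using nT[OF s] by (simp add: T_def norm_eq_1)
    have T'T: "T' \<bullet> T = 0" using cf(4)[OF s] by (simp add: T'_def T_def)
    have T'V: "T' \<bullet> cross3 U T = 0" using assms(4) s
      by (simp add: geodesic_curvature_def darbouxV_def T'_def U_def T_def)
    have kdef: "k s = T' \<bullet> U" by (simp add: k_def normal_curvature_def T'_def U_def)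
    have k0: "k s \<noteq> 0" using assms(5) s by (simp add: k_def)
    have T'eq: "T' = k s *\<^sub>R U" using frame_lemma[OF UU TT UT T'T T'V] kdef by simp
    have nU: "norm U = 1" using UU by (simp add: norm_eq_1)
    have curv: "curvature \<gamma> s = \<bar>k s\<bar>" using nU by (simp add: curvature_def T'eq[unfolded T'_def])
    have PN: "principal_normal \<gamma> s = sgn (k s) *\<^sub>R U"
      using k0 by (simp add: principal_normal_def curv T'eq[unfolded T'_def] sgn_if)
    have "binormal \<gamma> s = sgn (k s) *\<^sub>R cross3 T U"
      by (simp add: binormal_def PN T_def cross_mult_right)
    also have "cross3 T U = - cross3 U T" by (rule cross_skew)
    finally show ?thesis using PN k0 by (simp add: U_def darbouxV_def T_def)
  qed
  have kcont: "continuous_on I k"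
  proof -
    have "continuous_on I (\<lambda>s. n (\<gamma> s))"
      using un cf(5) gM unfolding unit_normal_field_def
      by (intro continuous_on_compose2[of M n I \<gamma>]) auto
    then have "continuous_on I (\<lambda>s. vector_derivative (tangent \<gamma>) (at s) \<bullet> n (\<gamma> s))"
      using cf(3) by (intro continuous_on_inner)
    then show ?thesis by (simp add: k_def normal_curvature_def darbouxU_def)
  qed
  have sgnconst: "(\<forall>s\<in>I. k s > 0) \<or> (\<forall>s\<in>I. k s < 0)"
  proof (rule ccontr)
    assume H: "\<not> ((\<forall>s\<in>I. k s > 0) \<or> (\<forall>s\<in>I. k s < 0))"
    have "\<exists>a\<in>I. \<not> k a > 0" "\<exists>b\<in>I. \<not> k b < 0" using H by blast+
    then obtain a b where ab: "a \<in> I" "b \<in> I" "\<not> k a > 0" "\<not> k b < 0" by blast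
    have "k a \<noteq> 0" "k b \<noteq> 0" using frame[OF ab(1)] frame[OF ab(2)] by blast+
    then have ka: "k a < 0" and kb: "k b > 0" using ab by linarith+
    have "connected (k ` I)"
      using connected_continuous_image[OF kcont] I(2) is_interval_connected_1 by blast
    then have iv: "is_interval (k ` I)" using is_interval_connected_1 by blast
    have "k a \<in> k ` I" "k b \<in> k ` I" using ab by auto
    then have "0 \<in> k ` I" using ka kb mem_is_interval_1_I[OF iv] by force
    then obtain x where x: "x \<in> I" "k x = 0" by auto
    then show False using frame[OF x(1)] by blast
  qed
  have slant: "slant_helix \<gamma> I"
  proof -
    obtain d \<phi> where d: "norm d = 1" "\<And>s. s \<in> I \<Longrightarrow> darbouxU n \<gamma> s \<bullet> d = cos \<phi>"
      using assms(3) unfolding isophotic_def by blast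
    have PNd: "principal_normal \<gamma> s \<bullet> d = sgn (k s) * cos \<phi>" if s: "s \<in> I" for s
    proof -
      have "principal_normal \<gamma> s = sgn (k s) *\<^sub>R darbouxU n \<gamma> s" using frame[OF s] by blast
      then show ?thesis using d(2)[OF s] by simp
    qed
    from sgnconst show ?thesis
    proof
      assume kp: "\<forall>s\<in>I. k s > 0"
      have "\<forall>s\<in>I. principal_normal \<gamma> s \<bullet> d = cos \<phi>" using PNd kp by simp
      then show ?thesis unfolding slant_helix_def using d(1) by blast
    next
      assume kn: "\<forall>s\<in>I. k s < 0"
      have "\<forall>s\<in>I. principal_normal \<gamma> s \<bullet> d = - cos \<phi>" using PNd kn by simp
      then show ?thesis unfolding slant_helix_def using d(1) by blast
    qed
  qed
  have rect: "rectifying_curve \<gamma> I"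
  proof -
    obtain \<mu>1 \<mu>2 where mu: "\<And>s. s \<in> I \<Longrightarrow> \<gamma> s = \<mu>1 s *\<^sub>R tangent \<gamma> s + \<mu>2 s *\<^sub>R darbouxV n \<gamma> s"
      using assms(6) unfolding position_in_TV_plane_def by blast
    have "\<forall>s\<in>I. \<gamma> s = \<mu>1 s *\<^sub>R tangent \<gamma> s + (- sgn (k s) * \<mu>2 s) *\<^sub>R binormal \<gamma> s"
    proof
      fix s assume s: "s \<in> I"
      have B: "binormal \<gamma> s = - sgn (k s) *\<^sub>R darbouxV n \<gamma> s" and k0: "k s \<noteq> 0"
        using frame[OF s] by blast+
      have ss: "sgn (k s) * sgn (k s) = 1" using k0 by (simp add: sgn_if)
      have "(- sgn (k s) * \<mu>2 s) *\<^sub>R binormal \<gamma> s = (sgn (k s) * sgn (k s) * \<mu>2 s) *\<^sub>R darbouxV n \<gamma> s"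
        unfolding B by (simp add: scaleR_scaleR mult.commute mult.left_commute)
      also have "\<dots> = \<mu>2 s *\<^sub>R darbouxV n \<gamma> s" by (simp only: ss mult_1)
      finally show "\<gamma> s = \<mu>1 s *\<^sub>R tangent \<gamma> s + (- sgn (k s) * \<mu>2 s) *\<^sub>R binormal \<gamma> s"
        using mu[OF s] by simp
    qed
    then show ?thesis unfolding rectifying_curve_def by (intro exI[of _ \<mu>1] exI[of _ "\<lambda>s. - sgn (k s) * \<mu>2 s"])
  qed
  show ?thesis using slant rect by simp
qed

end
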